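(* Suppose $\mathcal E$ generates a stochastic process. Then for all $j,j'\in\{0,\dots,n_\tau\}$ with $j'\ge j$, all $x,x'\in\Lambda$ and all $h\in\mathbb R^{\{1,\dots,n_\tau\}\times\Lambda}$, $$\big|\mathcal C(h)_{(j,x),(j',x')}\big|\le\big|\mathcal C(0)_{(j,x),(j',x')}\big|=\big(e^{-(j'-j)\epsilon\mathcal E}\big)_{x,x'} .$$
   Context: $\Lambda$ is a finite discrete torus $\mathbb Z^d/L\mathbb Z^d$ (lattice spacing $1$), operators on $\mathbb C^\Lambda$ are identified with their matrices, and functions on $\Lambda$ act as multiplication operators. $\mathcal E$ is a hermitian operator on $\mathbb C^\Lambda$; it generates a stochastic process if $(e^{-\tau\mathcal E})_{x,y}\ge0$ for all $\tau\ge0$ and $x,y\in\Lambda$. $\beta>0$, $n_\tau\in\mathbb N$, $\epsilon=\beta/n_\tau$. For $h=(h_j)_{j=1}^{n_\tau}$, $h_j\in\mathbb R^\Lambda$, and $h_0:=0$, let $\mathcal Q(h)$ be the block matrix indexed by $j,j'\in\{0,\dots,n_\tau\}$ with $\mathcal Q(h)_{j,j'}=\delta_{j,j'}\mathbf 1-\delta_{j+1,j'}e^{-\epsilon\mathcal E}e^{i\sqrt\epsilon h_{j'}}$ (it is upper triangular with identity diagonal, hence invertible), and $\mathcal C(h)=\mathcal Q(h)^{-1}$ with matrix elements $\mathcal C(h)_{(j,x),(j',x')}$. *)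

theory Defs
  imports "HOL-Analysis.Analysis"
begin

text \<open>The discrete torus Z^d / L Z^d, represented by the canonical representatives
  (integer vectors of length d with entries in 0..L-1).\<close>
definition torus :: "nat \<Rightarrow> int \<Rightarrow> int list set" where
  "torus d L = {x. length x = d \<and> (\<forall>i\<in>set x. 0 \<le> i \<and> i < L)}"

definition is_mat :: "'a set \<Rightarrow> ('a \<Rightarrow> 'a \<Rightarrow> complex) \<Rightarrow> bool" where
  "is_mat S A \<longleftrightarrow> (\<forall>x y. (x \<notin> S \<or> y \<notin> S) \<longrightarrow> A x y = 0)"

definition mat_id :: "'a set \<Rightarrow> 'a \<Rightarrow> 'a \<Rightarrow> complex" where
  "mat_id S x y = (if x \<in> S \<and> y \<in> S \<and> x = y then 1 else 0)"

definition mat_mult :: "'a set \<Rightarrow> ('a \<Rightarrow> 'a \<Rightarrow> complex) \<Rightarrow> ('a \<Rightarrow> 'a \<Rightarrow> complex)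
    \<Rightarrow> 'a \<Rightarrow> 'a \<Rightarrow> complex" where
  "mat_mult S A B x y = (if x \<in> S \<and> y \<in> S then (\<Sum>z\<in>S. A x z * B z y) else 0)"

definition mat_scale :: "complex \<Rightarrow> ('a \<Rightarrow> 'a \<Rightarrow> complex) \<Rightarrow> 'a \<Rightarrow> 'a \<Rightarrow> complex" where
  "mat_scale c A x y = c * A x y"

primrec mat_pow :: "'a set \<Rightarrow> ('a \<Rightarrow> 'a \<Rightarrow> complex) \<Rightarrow> nat \<Rightarrow> 'a \<Rightarrow> 'a \<Rightarrow> complex" where
  "mat_pow S A 0 = mat_id S"
| "mat_pow S A (Suc n) = mat_mult S A (mat_pow S A n)"

definition mat_exp :: "'a set \<Rightarrow> ('a \<Rightarrow> 'a \<Rightarrow> complex) \<Rightarrow> 'a \<Rightarrow> 'a \<Rightarrow> complex" where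
  "mat_exp S A x y = (\<Sum>n. mat_pow S A n x y / of_nat (fact n))"

definition mult_op :: "'a set \<Rightarrow> ('a \<Rightarrow> complex) \<Rightarrow> 'a \<Rightarrow> 'a \<Rightarrow> complex" where
  "mult_op S f x y = (if x \<in> S \<and> y \<in> S \<and> x = y then f x else 0)"

definition mat_inv :: "'a set \<Rightarrow> ('a \<Rightarrow> 'a \<Rightarrow> complex) \<Rightarrow> 'a \<Rightarrow> 'a \<Rightarrow> complex" where
  "mat_inv S A = (THE B. is_mat S B \<and> mat_mult S A B = mat_id S \<and> mat_mult S B A = mat_id S)"

definition hermitian_mat :: "'a set \<Rightarrow> ('a \<Rightarrow> 'a \<Rightarrow> complex) \<Rightarrow> bool" where
  "hermitian_mat S A \<longleftrightarrow> is_mat S A \<and> (\<forall>x\<in>S. \<forall>y\<in>S. A x y = cnj (A y x))"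

definition generates_stochastic :: "'a set \<Rightarrow> ('a \<Rightarrow> 'a \<Rightarrow> complex) \<Rightarrow> bool" where
  "generates_stochastic S E \<longleftrightarrow>
     (\<forall>\<tau>::real. \<tau> \<ge> 0 \<longrightarrow> (\<forall>x\<in>S. \<forall>y\<in>S.
        mat_exp S (mat_scale (complex_of_real (-\<tau>)) E) x y \<in> \<real> \<and>
        0 \<le> Re (mat_exp S (mat_scale (complex_of_real (-\<tau>)) E) x y)))"

text \<open>The block matrix Q(h) on {0..n_tau} x Lambda, with eps = beta / n_tau;
  h j is the field at time slice j (only j = 1..n_tau are used).\<close>
definition Qmat :: "'a set \<Rightarrow> ('a \<Rightarrow> 'a \<Rightarrow> complex) \<Rightarrow> real \<Rightarrow> nat
    \<Rightarrow> (nat \<Rightarrow> 'a \<Rightarrow> real) \<Rightarrow> nat \<times> 'a \<Rightarrow> nat \<times> 'a \<Rightarrow> complex" where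
  "Qmat \<Lambda> E \<epsilon> n h = (\<lambda>(j, x) (j', x').
     if j \<in> {0..n} \<and> j' \<in> {0..n} \<and> x \<in> \<Lambda> \<and> x' \<in> \<Lambda> then
       (if j = j' \<and> x = x' then 1 else 0)
       - (if j + 1 = j' then
            mat_mult \<Lambda> (mat_exp \<Lambda> (mat_scale (complex_of_real (-\<epsilon>)) E))
              (mult_op \<Lambda> (\<lambda>y. exp (\<i> * complex_of_real (sqrt \<epsilon> * h j' y)))) x x'
          else 0)
     else 0)"

definition Cmat :: "'a set \<Rightarrow> ('a \<Rightarrow> 'a \<Rightarrow> complex) \<Rightarrow> real \<Rightarrow> nat
    \<Rightarrow> (nat \<Rightarrow> 'a \<Rightarrow> real) \<Rightarrow> nat \<times> 'a \<Rightarrow> nat \<times> 'a \<Rightarrow> complex" where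
  "Cmat \<Lambda> E \<epsilon> n h = mat_inv ({0..n} \<times> \<Lambda>) (Qmat \<Lambda> E \<epsilon> n h)"

end

theory Submission
  imports Defs
begin


lemma is_mat_mult[simp]: "is_mat S (mat_mult S A B)"
  by (simp add: is_mat_def mat_mult_def)
lemma is_mat_id[simp]: "is_mat S (mat_id S)"
  by (simp add: is_mat_def mat_id_def)
lemma is_mat_pow[simp]: "is_mat S (mat_pow S A n)"
  by (cases n) auto
lemma mat_pow_out: "x \<notin> S \<or> y \<notin> S \<Longrightarrow> mat_pow S A n x y = 0"
  using is_mat_pow[of S A n] unfolding is_mat_def by blast
lemma is_mat_exp[simp]: "is_mat S (mat_exp S A)"
  by (simp add: is_mat_def mat_exp_def mat_pow_out)
lemma is_mat_mult_op[simp]: "is_mat S (mult_op S f)"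
  by (simp add: is_mat_def mult_op_def)

lemma mat_mult_assoc: "mat_mult S (mat_mult S A B) C = mat_mult S A (mat_mult S B C)"
proof (intro ext)
  fix x y
  show "mat_mult S (mat_mult S A B) C x y = mat_mult S A (mat_mult S B C) x y"
  proof (cases "x \<in> S \<and> y \<in> S")
    case True
    have "(\<Sum>z\<in>S. mat_mult S A B x z * C z y) = (\<Sum>z\<in>S. \<Sum>w\<in>S. A x w * B w z * C z y)"
      using True by (auto simp: mat_mult_def sum_distrib_right intro!: sum.cong)
    also have "\<dots> = (\<Sum>w\<in>S. \<Sum>z\<in>S. A x w * B w z * C z y)" by (rule sum.swap)
    also have "\<dots> = (\<Sum>w\<in>S. A x w * mat_mult S B C w y)"
      using True by (auto simp: mat_mult_def sum_distrib_left mult.assoc intro!: sum.cong)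
    finally show ?thesis using True by (simp add: mat_mult_def)
  qed (auto simp: mat_mult_def)
qed

lemma mat_mult_id_left: "finite S \<Longrightarrow> is_mat S B \<Longrightarrow> mat_mult S (mat_id S) B = B"
proof (intro ext)
  fix x y assume fin: "finite S" and B: "is_mat S B"
  show "mat_mult S (mat_id S) B x y = B x y"
  proof (cases "x \<in> S \<and> y \<in> S")
    case True
    have "(\<Sum>z\<in>S. mat_id S x z * B z y) = (\<Sum>z\<in>S. if z = x then B x y else 0)"
      using True by (auto simp: mat_id_def intro!: sum.cong)
    also have "\<dots> = B x y" using True fin by simp
    finally show ?thesis using True by (simp add: mat_mult_def)
  qed (use B in \<open>auto simp: mat_mult_def is_mat_def\<close>)
qed

lemma mat_mult_id_right: "finite S \<Longrightarrow> is_mat S B \<Longrightarrow> mat_mult S B (mat_id S) = B"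
proof (intro ext)
  fix x y assume fin: "finite S" and B: "is_mat S B"
  show "mat_mult S B (mat_id S) x y = B x y"
  proof (cases "x \<in> S \<and> y \<in> S")
    case True
    have "(\<Sum>z\<in>S. B x z * mat_id S z y) = (\<Sum>z\<in>S. if z = y then B x y else 0)"
      using True by (auto simp: mat_id_def intro!: sum.cong)
    also have "\<dots> = B x y" using True fin by simp
    finally show ?thesis using True by (simp add: mat_mult_def)
  qed (use B in \<open>auto simp: mat_mult_def is_mat_def\<close>)
qed

lemma mat_pow_add: "finite S \<Longrightarrow> mat_pow S A (i + k) = mat_mult S (mat_pow S A i) (mat_pow S A k)"
  by (induct i) (simp_all add: mat_mult_id_left mat_mult_assoc)

lemma mat_mult_scale: "mat_mult S (mat_scale c A) (mat_scale d B) = mat_scale (c * d) (mat_mult S A B)"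
  by (auto simp: fun_eq_iff mat_mult_def mat_scale_def sum_distrib_left mult_ac intro!: sum.cong)

lemma mat_pow_scale: "mat_pow S (mat_scale c A) n = mat_scale (c ^ n) (mat_pow S A n)"
proof (induct n)
  case 0
  then show ?case by (simp add: mat_scale_def fun_eq_iff)
next
  case (Suc n)
  then show ?case by (simp add: mat_mult_scale)
qed

lemma mat_pow_bound:
  assumes "finite S"
  shows "cmod (mat_pow S A n x y) \<le> (\<Sum>u\<in>S. \<Sum>v\<in>S. cmod (A u v)) ^ n"
proof (induct n arbitrary: x y)
  case 0
  then show ?case by (simp add: mat_id_def)
next
  case (Suc n)
  let ?B = "\<Sum>u\<in>S. \<Sum>v\<in>S. cmod (A u v)"
  show ?case
  proof (cases "x \<in> S \<and> y \<in> S")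
    case True
    have "cmod (\<Sum>z\<in>S. A x z * mat_pow S A n z y) \<le> (\<Sum>z\<in>S. cmod (A x z) * cmod (mat_pow S A n z y))"
      by (rule order_trans[OF norm_sum]) (simp add: norm_mult)
    also have "\<dots> \<le> (\<Sum>z\<in>S. cmod (A x z) * ?B ^ n)"
      by (intro sum_mono mult_left_mono Suc) auto
    also have "\<dots> = (\<Sum>z\<in>S. cmod (A x z)) * ?B ^ n" by (simp add: sum_distrib_right)
    also have "\<dots> \<le> ?B * ?B ^ n"
      by (intro mult_right_mono member_le_sum[where f="\<lambda>u. \<Sum>v\<in>S. cmod (A u v)", OF True[THEN conjunct1]])
         (auto intro!: sum_nonneg zero_le_power assms)
    finally show ?thesis using True by (simp add: mat_mult_def)
  qed (auto simp: mat_mult_def intro!: sum_nonneg zero_le_power mult_nonneg_nonneg)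
qed

lemma exp_terms_summable:
  assumes "finite S"
  shows "summable (\<lambda>n. cmod (c ^ n * mat_pow S A n x y / of_nat (fact n)))"
proof -
  define B where "B = (\<Sum>u\<in>S. \<Sum>v\<in>S. cmod (A u v))"
  have "summable (\<lambda>n. (cmod c * B) ^ n /\<^sub>R fact n)" by (rule summable_exp_generic)
  then show ?thesis
  proof (rule summable_comparison_test'[where N=0])
    fix n :: nat
    have "cmod (c ^ n * mat_pow S A n x y / of_nat (fact n)) = cmod c ^ n * cmod (mat_pow S A n x y) / fact n"
      by (simp add: norm_mult norm_divide norm_power)
    also have "\<dots> \<le> cmod c ^ n * B ^ n / fact n"
      unfolding B_def by (intro divide_right_mono mult_left_mono mat_pow_bound assms) auto
    finally show "norm (cmod (c ^ n * mat_pow S A n x y / of_nat (fact n))) \<le> (cmod c * B) ^ n /\<^sub>R fact n"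
      by (simp add: power_mult_distrib divide_inverse mult_ac)
  qed
qed

lemma mat_exp_add:
  assumes "finite S"
  shows "mat_mult S (mat_exp S (mat_scale a A)) (mat_exp S (mat_scale b A)) = mat_exp S (mat_scale (a + b) A)"
proof (intro ext)
  fix x y
  define f where "f = (\<lambda>c u v n. c ^ n * mat_pow S A n u v / of_nat (fact n))"
  have me: "mat_exp S (mat_scale c A) u v = (\<Sum>n. f c u v n)" for c u v
    by (simp add: mat_exp_def mat_pow_scale mat_scale_def f_def)
  show "mat_mult S (mat_exp S (mat_scale a A)) (mat_exp S (mat_scale b A)) x y = mat_exp S (mat_scale (a + b) A) x y"
  proof (cases "x \<in> S \<and> y \<in> S")
    case True
    have "(\<lambda>k. \<Sum>z\<in>S. \<Sum>i\<le>k. f a x z i * f b z y (k - i)) sums (\<Sum>z\<in>S. (\<Sum>n. f a x z n) * (\<Sum>n. f b z y n))"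
      by (intro sums_sum Cauchy_product_sums; unfold f_def; rule exp_terms_summable[OF assms])
    moreover have "(\<Sum>z\<in>S. \<Sum>i\<le>k. f a x z i * f b z y (k - i)) = f (a + b) x y k" for k
    proof -
      define E where "E = (\<lambda>(c::complex) (n::nat). c ^ n /\<^sub>R fact n)"
      have "(\<Sum>z\<in>S. \<Sum>i\<le>k. f a x z i * f b z y (k - i))
          = (\<Sum>i\<le>k. E a i * E b (k - i) * (\<Sum>z\<in>S. mat_pow S A i x z * mat_pow S A (k - i) z y))"
        unfolding f_def E_def
        by (subst sum.swap) (auto simp: sum_distrib_left scaleR_conv_of_real divide_inverse mult_ac intro!: sum.cong)
      also have "\<dots> = (\<Sum>i\<le>k. E a i * E b (k - i)) * mat_pow S A k x y"
        unfolding sum_distrib_right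
      proof (intro sum.cong refl)
        fix i assume "i \<in> {..k}"
        then have "mat_pow S A k = mat_mult S (mat_pow S A i) (mat_pow S A (k - i))"
          using mat_pow_add[OF assms, of A i "k - i"] by simp
        then show "E a i * E b (k - i) * (\<Sum>z\<in>S. mat_pow S A i x z * mat_pow S A (k - i) z y) = E a i * E b (k - i) * mat_pow S A k x y"
          using True by (simp add: mat_mult_def)
      qed
      also have "\<dots> = E (a + b) k * mat_pow S A k x y"
        unfolding E_def by (subst exp_series_add_commuting) auto
      finally show ?thesis by (simp add: E_def f_def scaleR_conv_of_real divide_inverse mult_ac)
    qed
    ultimately have "(\<lambda>k. f (a + b) x y k) sums (\<Sum>z\<in>S. (\<Sum>n. f a x z n) * (\<Sum>n. f b z y n))"
      by simp
    then show ?thesis using True by (simp add: me mat_mult_def sums_iff)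
  qed (auto simp: mat_mult_def mat_exp_def mat_pow_out)
qed



definition Tm :: "'a set \<Rightarrow> ('a \<Rightarrow> 'a \<Rightarrow> complex) \<Rightarrow> real \<Rightarrow> (nat \<Rightarrow> 'a \<Rightarrow> real) \<Rightarrow> nat \<Rightarrow> 'a \<Rightarrow> 'a \<Rightarrow> complex" where
  "Tm \<Lambda> E \<epsilon> h k = mat_mult \<Lambda> (mat_exp \<Lambda> (mat_scale (complex_of_real (-\<epsilon>)) E))
              (mult_op \<Lambda> (\<lambda>y. exp (\<i> * complex_of_real (sqrt \<epsilon> * h k y))))"

primrec Pm :: "'a set \<Rightarrow> ('a \<Rightarrow> 'a \<Rightarrow> complex) \<Rightarrow> real \<Rightarrow> (nat \<Rightarrow> 'a \<Rightarrow> real) \<Rightarrow> nat \<Rightarrow> nat \<Rightarrow> 'a \<Rightarrow> 'a \<Rightarrow> complex" where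
  "Pm \<Lambda> E \<epsilon> h j 0 = mat_id \<Lambda>"
| "Pm \<Lambda> E \<epsilon> h j (Suc m) = mat_mult \<Lambda> (Pm \<Lambda> E \<epsilon> h j m) (Tm \<Lambda> E \<epsilon> h (j + Suc m))"

definition Cm :: "'a set \<Rightarrow> ('a \<Rightarrow> 'a \<Rightarrow> complex) \<Rightarrow> real \<Rightarrow> nat \<Rightarrow> (nat \<Rightarrow> 'a \<Rightarrow> real) \<Rightarrow> nat \<times> 'a \<Rightarrow> nat \<times> 'a \<Rightarrow> complex" where
  "Cm \<Lambda> E \<epsilon> n h = (\<lambda>(j, x) (j', x'). if j \<le> n \<and> j' \<le> n \<and> x \<in> \<Lambda> \<and> x' \<in> \<Lambda> \<and> j \<le> j'
       then Pm \<Lambda> E \<epsilon> h j (j' - j) x x' else 0)"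

lemma is_mat_Tm[simp]: "is_mat \<Lambda> (Tm \<Lambda> E \<epsilon> h k)" by (simp add: Tm_def)
lemma is_mat_Pm[simp]: "is_mat \<Lambda> (Pm \<Lambda> E \<epsilon> h j m)" by (cases m) auto

lemma Pm_left:
  assumes "finite \<Lambda>"
  shows "Pm \<Lambda> E \<epsilon> h j (Suc m) = mat_mult \<Lambda> (Tm \<Lambda> E \<epsilon> h (Suc j)) (Pm \<Lambda> E \<epsilon> h (Suc j) m)"
proof (induct m)
  case 0
  then show ?case using assms by (simp add: mat_mult_id_left mat_mult_id_right)
next
  case (Suc m)
  have "Pm \<Lambda> E \<epsilon> h j (Suc (Suc m)) = mat_mult \<Lambda> (Pm \<Lambda> E \<epsilon> h j (Suc m)) (Tm \<Lambda> E \<epsilon> h (j + Suc (Suc m)))"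
    by simp
  also have "\<dots> = mat_mult \<Lambda> (Tm \<Lambda> E \<epsilon> h (Suc j)) (Pm \<Lambda> E \<epsilon> h (Suc j) (Suc m))"
    using Suc by (simp add: mat_mult_assoc)
  finally show ?case .
qed

lemma Qmat_eq:
  "Qmat \<Lambda> E \<epsilon> n h (j, x) (j', x') = (if j \<le> n \<and> j' \<le> n \<and> x \<in> \<Lambda> \<and> x' \<in> \<Lambda> then
       (if j = j' \<and> x = x' then 1 else 0) - (if j + 1 = j' then Tm \<Lambda> E \<epsilon> h j' x x' else 0) else 0)"
  by (simp add: Qmat_def Tm_def)

lemma is_mat_Qmat: "is_mat ({0..n} \<times> \<Lambda>) (Qmat \<Lambda> E \<epsilon> n h)"
  by (auto simp: is_mat_def Qmat_eq)

lemma is_mat_Cm: "is_mat ({0..n} \<times> \<Lambda>) (Cm \<Lambda> E \<epsilon> n h)"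
  by (auto simp: is_mat_def Cm_def)

lemma sum_block: "finite \<Lambda> \<Longrightarrow> (\<Sum>p\<in>{0..n} \<times> \<Lambda>. F p) = (\<Sum>k\<in>{0..n}. \<Sum>z\<in>\<Lambda>. F (k, z))"
  by (simp add: sum.cartesian_product)

lemma Q_left_sum:
  assumes fin: "finite \<Lambda>" and j: "j \<le> n" and x: "x \<in> \<Lambda>"
  shows "(\<Sum>p\<in>{0..n} \<times> \<Lambda>. Qmat \<Lambda> E \<epsilon> n h (j, x) p * G p)
     = G (j, x) - (if Suc j \<le> n then (\<Sum>z\<in>\<Lambda>. Tm \<Lambda> E \<epsilon> h (Suc j) x z * G (Suc j, z)) else 0)"
proof -
  have "(\<Sum>p\<in>{0..n} \<times> \<Lambda>. Qmat \<Lambda> E \<epsilon> n h (j, x) p * G p)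
      = (\<Sum>k\<in>{0..n}. \<Sum>z\<in>\<Lambda>. (if k = j then (if z = x then G (j, x) else 0) else 0)
            - (if k = Suc j then Tm \<Lambda> E \<epsilon> h (Suc j) x z * G (Suc j, z) else 0))"
    unfolding sum_block[OF fin]
    by (intro sum.cong refl) (auto simp: Qmat_eq j x left_diff_distrib)
  also have "\<dots> = (\<Sum>k\<in>{0..n}. (if k = j then G (j, x) else 0)
            - (if k = Suc j then (\<Sum>z\<in>\<Lambda>. Tm \<Lambda> E \<epsilon> h (Suc j) x z * G (Suc j, z)) else 0))"
    by (intro sum.cong refl) (simp add: sum_subtractf fin x)
  also have "\<dots> = G (j, x) - (if Suc j \<le> n then (\<Sum>z\<in>\<Lambda>. Tm \<Lambda> E \<epsilon> h (Suc j) x z * G (Suc j, z)) else 0)"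
    by (simp add: sum_subtractf j)
  finally show ?thesis .
qed

lemma Q_right_sum:
  assumes fin: "finite \<Lambda>" and j: "j' \<le> n" and x: "x' \<in> \<Lambda>"
  shows "(\<Sum>p\<in>{0..n} \<times> \<Lambda>. G p * Qmat \<Lambda> E \<epsilon> n h p (j', x'))
     = G (j', x') - (if 1 \<le> j' then (\<Sum>z\<in>\<Lambda>. G (j' - 1, z) * Tm \<Lambda> E \<epsilon> h j' z x') else 0)"
proof -
  have "(\<Sum>p\<in>{0..n} \<times> \<Lambda>. G p * Qmat \<Lambda> E \<epsilon> n h p (j', x'))
      = (\<Sum>k\<in>{0..n}. \<Sum>z\<in>\<Lambda>. (if k = j' then (if z = x' then G (j', x') else 0) else 0)
            - (if Suc k = j' then G (k, z) * Tm \<Lambda> E \<epsilon> h j' z x' else 0))"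
    unfolding sum_block[OF fin]
    by (intro sum.cong refl) (auto simp: Qmat_eq j x right_diff_distrib)
  also have "\<dots> = (\<Sum>k\<in>{0..n}. (if k = j' then G (j', x') else 0)
            - (if Suc k = j' then (\<Sum>z\<in>\<Lambda>. G (k, z) * Tm \<Lambda> E \<epsilon> h j' z x') else 0))"
    by (intro sum.cong refl) (simp add: sum_subtractf fin x)
  also have "\<dots> = G (j', x') - (if 1 \<le> j' then (\<Sum>z\<in>\<Lambda>. G (j' - 1, z) * Tm \<Lambda> E \<epsilon> h j' z x') else 0)"
  proof -
    have "(\<Sum>k\<in>{0..n}. (if Suc k = j' then (\<Sum>z\<in>\<Lambda>. G (k, z) * Tm \<Lambda> E \<epsilon> h j' z x') else 0))
        = (\<Sum>k\<in>{0..n}. (if k = j' - 1 \<and> 1 \<le> j' then (\<Sum>z\<in>\<Lambda>. G (j' - 1, z) * Tm \<Lambda> E \<epsilon> h j' z x') else 0))"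
      by (intro sum.cong refl) auto
    also have "\<dots> = (if 1 \<le> j' then (\<Sum>z\<in>\<Lambda>. G (j' - 1, z) * Tm \<Lambda> E \<epsilon> h j' z x') else 0)"
      using j by (cases "1 \<le> j'") (simp_all add: sum.delta')
    finally show ?thesis by (simp add: sum_subtractf j)
  qed
  finally show ?thesis .
qed

lemma QC:
  assumes fin: "finite \<Lambda>"
  shows "mat_mult ({0..n} \<times> \<Lambda>) (Qmat \<Lambda> E \<epsilon> n h) (Cm \<Lambda> E \<epsilon> n h) = mat_id ({0..n} \<times> \<Lambda>)"
proof (intro ext)
  fix p q :: "nat \<times> 'a"
  obtain j x where p: "p = (j, x)" by force
  obtain j' x' where q: "q = (j', x')" by force
  show "mat_mult ({0..n} \<times> \<Lambda>) (Qmat \<Lambda> E \<epsilon> n h) (Cm \<Lambda> E \<epsilon> n h) p q = mat_id ({0..n} \<times> \<Lambda>) p q"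
  proof (cases "j \<le> n \<and> x \<in> \<Lambda> \<and> j' \<le> n \<and> x' \<in> \<Lambda>")
    case True
    then have jn: "j \<le> n" and xL: "x \<in> \<Lambda>" and j'n: "j' \<le> n" and x'L: "x' \<in> \<Lambda>" by auto
    have "mat_mult ({0..n} \<times> \<Lambda>) (Qmat \<Lambda> E \<epsilon> n h) (Cm \<Lambda> E \<epsilon> n h) p q
      = Cm \<Lambda> E \<epsilon> n h (j, x) (j', x') - (if Suc j \<le> n then (\<Sum>z\<in>\<Lambda>. Tm \<Lambda> E \<epsilon> h (Suc j) x z * Cm \<Lambda> E \<epsilon> n h (Suc j, z) (j', x')) else 0)"
      using True by (simp add: mat_mult_def p q Q_left_sum[OF fin jn xL])
    also have "\<dots> = mat_id ({0..n} \<times> \<Lambda>) p q"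
    proof (cases "j < j'")
      case True
      then have "j' - j = Suc (j' - Suc j)" by simp
      then have "Pm \<Lambda> E \<epsilon> h j (j' - j) = mat_mult \<Lambda> (Tm \<Lambda> E \<epsilon> h (Suc j)) (Pm \<Lambda> E \<epsilon> h (Suc j) (j' - Suc j))"
        using Pm_left[OF fin, of E \<epsilon> h j "j' - Suc j"] by (simp only:)
      then have "Pm \<Lambda> E \<epsilon> h j (j' - j) x x' = (\<Sum>z\<in>\<Lambda>. Tm \<Lambda> E \<epsilon> h (Suc j) x z * Pm \<Lambda> E \<epsilon> h (Suc j) (j' - Suc j) z x')"
        using xL x'L by (simp add: mat_mult_def)
      then show ?thesis using True jn j'n xL x'L
        by (auto simp: Cm_def p q mat_id_def intro!: sum.cong)
    next
      case False
      then show ?thesis using jn j'n xL x'L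
        by (auto simp: Cm_def p q mat_id_def)
    qed
    finally show ?thesis .
  qed (auto simp: mat_mult_def mat_id_def p q)
qed

lemma CQ:
  assumes fin: "finite \<Lambda>"
  shows "mat_mult ({0..n} \<times> \<Lambda>) (Cm \<Lambda> E \<epsilon> n h) (Qmat \<Lambda> E \<epsilon> n h) = mat_id ({0..n} \<times> \<Lambda>)"
proof (intro ext)
  fix p q :: "nat \<times> 'a"
  obtain j x where p: "p = (j, x)" by force
  obtain j' x' where q: "q = (j', x')" by force
  show "mat_mult ({0..n} \<times> \<Lambda>) (Cm \<Lambda> E \<epsilon> n h) (Qmat \<Lambda> E \<epsilon> n h) p q = mat_id ({0..n} \<times> \<Lambda>) p q"
  proof (cases "j \<le> n \<and> x \<in> \<Lambda> \<and> j' \<le> n \<and> x' \<in> \<Lambda>")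
    case True
    then have jn: "j \<le> n" and xL: "x \<in> \<Lambda>" and j'n: "j' \<le> n" and x'L: "x' \<in> \<Lambda>" by auto
    have "mat_mult ({0..n} \<times> \<Lambda>) (Cm \<Lambda> E \<epsilon> n h) (Qmat \<Lambda> E \<epsilon> n h) p q
      = Cm \<Lambda> E \<epsilon> n h (j, x) (j', x') - (if 1 \<le> j' then (\<Sum>z\<in>\<Lambda>. Cm \<Lambda> E \<epsilon> n h (j, x) (j' - 1, z) * Tm \<Lambda> E \<epsilon> h j' z x') else 0)"
      using True by (simp add: mat_mult_def p q Q_right_sum[OF fin j'n x'L])
    also have "\<dots> = mat_id ({0..n} \<times> \<Lambda>) p q"
    proof (cases "j < j'")
      case True
      then have e: "j' - j = Suc (j' - 1 - j)" and e2: "j + Suc (j' - 1 - j) = j'" by auto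
      have "Pm \<Lambda> E \<epsilon> h j (j' - j) x x' = (\<Sum>z\<in>\<Lambda>. Pm \<Lambda> E \<epsilon> h j (j' - 1 - j) x z * Tm \<Lambda> E \<epsilon> h j' z x')"
        using xL x'L by (simp only: e Pm.simps e2) (simp add: mat_mult_def)
      then show ?thesis using True jn j'n xL x'L
        by (auto simp: Cm_def p q mat_id_def intro!: sum.cong)
    next
      case False
      then show ?thesis using jn j'n xL x'L
        by (auto simp: Cm_def p q mat_id_def intro!: sum.neutral)
    qed
    finally show ?thesis .
  qed (auto simp: mat_mult_def mat_id_def p q)
qed

lemma mat_inv_unique:
  assumes fin: "finite S" and B: "is_mat S B" and AB: "mat_mult S A B = mat_id S" and BA: "mat_mult S B A = mat_id S"
  shows "mat_inv S A = B"
  unfolding mat_inv_def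
proof (rule the_equality)
  show "is_mat S B \<and> mat_mult S A B = mat_id S \<and> mat_mult S B A = mat_id S" using assms by simp
next
  fix B' assume H: "is_mat S B' \<and> mat_mult S A B' = mat_id S \<and> mat_mult S B' A = mat_id S"
  have "B' = mat_mult S B' (mat_mult S A B)" using H fin by (simp add: AB mat_mult_id_right)
  also have "\<dots> = mat_mult S (mat_mult S B' A) B" by (simp add: mat_mult_assoc)
  also have "\<dots> = B" using H fin B by (simp add: mat_mult_id_left)
  finally show "B' = B" .
qed

lemma Cmat_eq:
  assumes "finite \<Lambda>"
  shows "Cmat \<Lambda> E \<epsilon> n h = Cm \<Lambda> E \<epsilon> n h"
  unfolding Cmat_def using assms
  by (intro mat_inv_unique QC CQ is_mat_Cm) auto



lemma mat_exp_zero: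
  "mat_exp S (mat_scale 0 A) = mat_id S"
proof (intro ext)
  fix x y
  have "(\<Sum>n. mat_pow S (mat_scale 0 A) n x y / of_nat (fact n)) = mat_pow S (mat_scale 0 A) 0 x y / of_nat (fact 0)"
    by (subst suminf_finite[of "{0}"]) (auto simp: mat_pow_scale mat_scale_def)
  then show "mat_exp S (mat_scale 0 A) x y = mat_id S x y" by (simp add: mat_exp_def)
qed

lemma Tm_zero:
  assumes "finite \<Lambda>"
  shows "Tm \<Lambda> E \<epsilon> (\<lambda>_ _. 0) k = mat_exp \<Lambda> (mat_scale (complex_of_real (-\<epsilon>)) E)"
proof -
  have "mult_op \<Lambda> (\<lambda>y. exp (\<i> * complex_of_real (sqrt \<epsilon> * (\<lambda>_ _. 0::real) k y))) = mat_id \<Lambda>"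
    by (simp add: mult_op_def mat_id_def fun_eq_iff)
  then show ?thesis using assms by (simp add: Tm_def mat_mult_id_right)
qed

lemma Pm_zero:
  assumes "finite \<Lambda>"
  shows "Pm \<Lambda> E \<epsilon> (\<lambda>_ _. 0) j m = mat_exp \<Lambda> (mat_scale (complex_of_real (- (real m * \<epsilon>))) E)"
proof (induct m)
  case 0
  then show ?case by (simp add: mat_exp_zero)
next
  case (Suc m)
  have "Pm \<Lambda> E \<epsilon> (\<lambda>_ _. 0) j (Suc m) = mat_mult \<Lambda> (mat_exp \<Lambda> (mat_scale (complex_of_real (- (real m * \<epsilon>))) E))
          (mat_exp \<Lambda> (mat_scale (complex_of_real (-\<epsilon>)) E))"
    using Suc assms by (simp add: Tm_zero)
  also have "\<dots> = mat_exp \<Lambda> (mat_scale (complex_of_real (- (real m * \<epsilon>)) + complex_of_real (-\<epsilon>)) E)"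
    by (rule mat_exp_add[OF assms])
  also have "complex_of_real (- (real m * \<epsilon>)) + complex_of_real (-\<epsilon>) = complex_of_real (- (real (Suc m) * \<epsilon>))"
    by (simp add: algebra_simps)
  finally show ?case .
qed

lemma Tm_entry:
  assumes "finite \<Lambda>" "z \<in> \<Lambda>" "y \<in> \<Lambda>"
  shows "Tm \<Lambda> E \<epsilon> h k z y = mat_exp \<Lambda> (mat_scale (complex_of_real (-\<epsilon>)) E) z y * exp (\<i> * complex_of_real (sqrt \<epsilon> * h k y))"
proof -
  have "(\<Sum>w\<in>\<Lambda>. mat_exp \<Lambda> (mat_scale (complex_of_real (-\<epsilon>)) E) z w * mult_op \<Lambda> (\<lambda>y. exp (\<i> * complex_of_real (sqrt \<epsilon> * h k y))) w y)
     = (\<Sum>w\<in>\<Lambda>. if w = y then mat_exp \<Lambda> (mat_scale (complex_of_real (-\<epsilon>)) E) z y * exp (\<i> * complex_of_real (sqrt \<epsilon> * h k y)) else 0)"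
    using assms by (intro sum.cong) (auto simp: mult_op_def)
  then show ?thesis using assms by (simp add: Tm_def mat_mult_def)
qed

lemma nonneg_cmod: "z \<in> \<real> \<Longrightarrow> 0 \<le> Re z \<Longrightarrow> cmod z = Re z"
  by (simp add: complex_is_Real_iff cmod_eq_Re)

lemma Pm_bound:
  assumes fin: "finite \<Lambda>" and eps: "\<epsilon> \<ge> 0"
    and st: "\<And>\<tau> x y. \<tau> \<ge> 0 \<Longrightarrow> x \<in> \<Lambda> \<Longrightarrow> y \<in> \<Lambda> \<Longrightarrow>
        mat_exp \<Lambda> (mat_scale (complex_of_real (-\<tau>)) E) x y \<in> \<real> \<and>
        0 \<le> Re (mat_exp \<Lambda> (mat_scale (complex_of_real (-\<tau>)) E) x y)"
    and x: "x \<in> \<Lambda>" and y: "y \<in> \<Lambda>"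
  shows "cmod (Pm \<Lambda> E \<epsilon> h j m x y) \<le> Re (Pm \<Lambda> E \<epsilon> (\<lambda>_ _. 0) j m x y)"
  using y
proof (induct m arbitrary: y)
  case 0
  then show ?case using x by (simp add: mat_id_def)
next
  case (Suc m)
  define K where "K = mat_exp \<Lambda> (mat_scale (complex_of_real (-\<epsilon>)) E)"
  define P0 where "P0 = Pm \<Lambda> E \<epsilon> (\<lambda>_ _. 0) j m"
  have KR: "K z y \<in> \<real>" "0 \<le> Re (K z y)" if "z \<in> \<Lambda>" for z
    using st[OF eps that Suc.prems] by (auto simp: K_def)
  have PR: "P0 x z \<in> \<real>" "0 \<le> Re (P0 x z)" if "z \<in> \<Lambda>" for z
    using st[of "real m * \<epsilon>" x z] eps x that by (auto simp: P0_def Pm_zero[OF fin])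
  have "cmod (Pm \<Lambda> E \<epsilon> h j (Suc m) x y)
      = cmod (\<Sum>z\<in>\<Lambda>. Pm \<Lambda> E \<epsilon> h j m x z * (K z y * exp (\<i> * complex_of_real (sqrt \<epsilon> * h (j + Suc m) y))))"
    using x Suc.prems by (simp add: mat_mult_def Tm_entry[OF fin] K_def)
  also have "\<dots> \<le> (\<Sum>z\<in>\<Lambda>. cmod (Pm \<Lambda> E \<epsilon> h j m x z) * cmod (K z y))"
    by (rule order_trans[OF norm_sum]) (simp add: norm_mult)
  also have "\<dots> \<le> (\<Sum>z\<in>\<Lambda>. Re (P0 x z) * Re (K z y))"
    using Suc.hyps KR PR by (intro sum_mono mult_mono) (auto simp: P0_def nonneg_cmod)
  also have "\<dots> = Re (\<Sum>z\<in>\<Lambda>. P0 x z * K z y)"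
    using KR PR by (auto simp: Re_sum complex_is_Real_iff intro!: sum.cong)
  also have "\<dots> = Re (Pm \<Lambda> E \<epsilon> (\<lambda>_ _. 0) j (Suc m) x y)"
    using x Suc.prems by (simp add: mat_mult_def Tm_zero[OF fin] K_def P0_def)
  finally show ?case .
qed



lemma finite_torus: "finite (torus d L)"
proof (rule finite_subset)
  show "torus d L \<subseteq> {xs. set xs \<subseteq> {0..<L} \<and> length xs = d}"
    by (auto simp: torus_def)
  show "finite {xs. set xs \<subseteq> {0..<L} \<and> length xs = d}"
    by (rule finite_lists_length_eq) simp
qed

theorem lemma6p1:
  fixes d :: nat and L :: int and E :: "int list \<Rightarrow> int list \<Rightarrow> complex"
    and \<beta> :: real and n\<^sub>\<tau> :: nat and h :: "nat \<Rightarrow> int list \<Rightarrow> real"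
    and j j' :: nat and x x' :: "int list"
  assumes "L \<ge> 1"
    and "hermitian_mat (torus d L) E"
    and "generates_stochastic (torus d L) E"
    and "\<beta> > 0" and "n\<^sub>\<tau> \<ge> 1"
    and "j \<le> n\<^sub>\<tau>" and "j' \<le> n\<^sub>\<tau>" and "j \<le> j'"
    and "x \<in> torus d L" and "x' \<in> torus d L"
  shows "cmod (Cmat (torus d L) E (\<beta> / real n\<^sub>\<tau>) n\<^sub>\<tau> h (j, x) (j', x'))
           \<le> cmod (Cmat (torus d L) E (\<beta> / real n\<^sub>\<tau>) n\<^sub>\<tau> (\<lambda>_ _. 0) (j, x) (j', x'))
       \<and> Cmat (torus d L) E (\<beta> / real n\<^sub>\<tau>) n\<^sub>\<tau> (\<lambda>_ _. 0) (j, x) (j', x')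
           = mat_exp (torus d L)
               (mat_scale (complex_of_real (- (real (j' - j) * (\<beta> / real n\<^sub>\<tau>)))) E) x x'"
proof -
  define \<Lambda> where "\<Lambda> = torus d L"
  define \<epsilon> where "\<epsilon> = \<beta> / real n\<^sub>\<tau>"
  have fin: "finite \<Lambda>" unfolding \<Lambda>_def by (rule finite_torus)
  have eps: "\<epsilon> \<ge> 0" using assms(4) by (simp add: \<epsilon>_def)
  have st: "\<And>\<tau> x y. \<tau> \<ge> 0 \<Longrightarrow> x \<in> \<Lambda> \<Longrightarrow> y \<in> \<Lambda> \<Longrightarrow>
        mat_exp \<Lambda> (mat_scale (complex_of_real (-\<tau>)) E) x y \<in> \<real> \<and>
        0 \<le> Re (mat_exp \<Lambda> (mat_scale (complex_of_real (-\<tau>)) E) x y)"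
    using assms(3) unfolding generates_stochastic_def \<Lambda>_def by blast
  have x: "x \<in> \<Lambda>" and x': "x' \<in> \<Lambda>" using assms by (auto simp: \<Lambda>_def)
  have C: "Cmat \<Lambda> E \<epsilon> n\<^sub>\<tau> g (j, x) (j', x') = Pm \<Lambda> E \<epsilon> g j (j' - j) x x'" for g
    using assms x x' by (simp add: Cmat_eq[OF fin] Cm_def)
  have C0: "Cmat \<Lambda> E \<epsilon> n\<^sub>\<tau> (\<lambda>_ _. 0) (j, x) (j', x')
      = mat_exp \<Lambda> (mat_scale (complex_of_real (- (real (j' - j) * \<epsilon>))) E) x x'"
    by (simp add: C Pm_zero[OF fin])
  have nn: "cmod (Cmat \<Lambda> E \<epsilon> n\<^sub>\<tau> (\<lambda>_ _. 0) (j, x) (j', x')) = Re (Pm \<Lambda> E \<epsilon> (\<lambda>_ _. 0) j (j' - j) x x')"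
    using st[of "real (j' - j) * \<epsilon>" x x'] eps x x' by (simp add: C0 C[symmetric] nonneg_cmod)
  have "cmod (Cmat \<Lambda> E \<epsilon> n\<^sub>\<tau> h (j, x) (j', x')) \<le> cmod (Cmat \<Lambda> E \<epsilon> n\<^sub>\<tau> (\<lambda>_ _. 0) (j, x) (j', x'))"
    using Pm_bound[OF fin eps st x x', of h j "j' - j"] nn by (simp add: C)
  with C0 show ?thesis unfolding \<Lambda>_def \<epsilon>_def by simp
qed

end
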